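(* Suppose an iteration of Dual KOSZ starting from potentials $\mathbf x^t$ samples a tree edge $(i,j)\in T$ with probability $P_{ij}=\frac1\tau\cdot\frac{r(i,j)}{R(C(i,j))}$, where $\tau=\sum_{(i,j)\in T}\frac{r(i,j)}{R(C(i,j))}$, producing $\mathbf x^{t+1}$. Then $$\mathcal B(\mathbf x^* )-\mathbb E[\mathcal B(\mathbf x^{t+1})]\le\Big(1-\frac1\tau\Big)\big(\mathcal B(\mathbf x^* )-\mathcal B(\mathbf x^t)\big).$$
   Context: $G=(V,E)$ is a connected undirected graph with resistances $r(e)>0$; $\mathbf b\in\mathbb R^V$ with $\sum_ib(i)=0$; $\mathbf L=\sum_{ij\in E}\frac1{r(i,j)}(\mathbf e_i-\mathbf e_j)(\mathbf e_i-\mathbf e_j)^\top$, $\mathcal B(\mathbf x)=\mathbf b^\top\mathbf x-\frac12\mathbf x^\top\mathbf L\mathbf x$, and $\mathbf x^*$ maximizes $\mathcal B$. $T$ is a spanning tree, rooted, with tree edges directed toward the root; for a tree edge $(i,j)$, $C(i,j)$ is the vertex set of the component of $T-ij$ containing $i$. For $C\subset V$: $R(C)=(\sum_{e\in\delta(C)}1/r(e))^{-1}$, $b(C)=\sum_{v\in C}b(v)$, $f(C)=\sum_{kl\in E,k\in C,l\notin C}\frac{x^t(k)-x^t(l)}{r(k,l)}$. One iteration of Dual KOSZ with sampled edge $(i,j)$: with $C=C(i,j)$ and $\Delta=(b(C)-f(C))R(C)$, set $\mathbf x^{t+1}=\mathbf x^t+\Delta\mathbbm 1_C$. The expectation is over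 the sampled edge. *)

theory Defs
  imports Main "HOL-Library.Sum_of_Squares" Complex_Main
begin

(* Graph: finite vertex set V, edge set E of ordered pairs, each undirected edge
   listed once in an arbitrary orientation; r symmetric resistance function. *)

definition undirected_graph :: "'a set \<Rightarrow> ('a \<times> 'a) set \<Rightarrow> bool" where
  "undirected_graph V E \<longleftrightarrow> finite V \<and> E \<subseteq> V \<times> V \<and>
     (\<forall>i j. (i,j) \<in> E \<longrightarrow> i \<noteq> j \<and> (j,i) \<notin> E)"

definition connected_graph :: "'a set \<Rightarrow> ('a \<times> 'a) set \<Rightarrow> bool" where
  "connected_graph V E \<longleftrightarrow> (\<forall>u\<in>V. \<forall>v\<in>V. (u,v) \<in> (E \<union> E\<inverse>)\<^sup>*)"

(* T is a spanning tree of (V,E) rooted at \<rho>, with every tree edge directed toward the root *)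
definition rooted_spanning_tree :: "'a set \<Rightarrow> ('a \<times> 'a) set \<Rightarrow> 'a \<Rightarrow> ('a \<times> 'a) set \<Rightarrow> bool" where
  "rooted_spanning_tree V E \<rho> T \<longleftrightarrow> \<rho> \<in> V \<and> T \<subseteq> E \<union> E\<inverse> \<and>
     (\<forall>j. (\<rho>, j) \<notin> T) \<and>
     (\<forall>v\<in>V - {\<rho>}. \<exists>!j. (v, j) \<in> T) \<and>
     (\<forall>v\<in>V. (v, \<rho>) \<in> T\<^sup>*)"

definition tree_comp :: "('a \<times> 'a) set \<Rightarrow> 'a \<times> 'a \<Rightarrow> 'a set" where
  "tree_comp T e = {w. (fst e, w) \<in> ((T - {e}) \<union> (T - {e})\<inverse>)\<^sup>*}"

definition cut_edges :: "('a \<times> 'a) set \<Rightarrow> 'a set \<Rightarrow> ('a \<times> 'a) set" where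
  "cut_edges E C = {(k,l) \<in> E. (k \<in> C) \<noteq> (l \<in> C)}"

definition Rcut :: "('a \<times> 'a) set \<Rightarrow> ('a \<Rightarrow> 'a \<Rightarrow> real) \<Rightarrow> 'a set \<Rightarrow> real" where
  "Rcut E r C = inverse (\<Sum>(k,l)\<in>cut_edges E C. 1 / r k l)"

definition bset :: "('a \<Rightarrow> real) \<Rightarrow> 'a set \<Rightarrow> real" where
  "bset b C = (\<Sum>v\<in>C. b v)"

definition fcut :: "('a \<times> 'a) set \<Rightarrow> ('a \<Rightarrow> 'a \<Rightarrow> real) \<Rightarrow> ('a \<Rightarrow> real) \<Rightarrow> 'a set \<Rightarrow> real" where
  "fcut E r x C = (\<Sum>(k,l)\<in>cut_edges E C.
       if k \<in> C then (x k - x l) / r k l else (x l - x k) / r k l)"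

definition lap_form :: "('a \<times> 'a) set \<Rightarrow> ('a \<Rightarrow> 'a \<Rightarrow> real) \<Rightarrow> ('a \<Rightarrow> real) \<Rightarrow> real" where
  "lap_form E r x = (\<Sum>(i,j)\<in>E. (x i - x j)\<^sup>2 / r i j)"

definition Bobj :: "'a set \<Rightarrow> ('a \<times> 'a) set \<Rightarrow> ('a \<Rightarrow> 'a \<Rightarrow> real) \<Rightarrow> ('a \<Rightarrow> real) \<Rightarrow> ('a \<Rightarrow> real) \<Rightarrow> real" where
  "Bobj V E r b x = (\<Sum>v\<in>V. b v * x v) - 1/2 * lap_form E r x"

definition kosz_step :: "('a \<times> 'a) set \<Rightarrow> ('a \<times> 'a) set \<Rightarrow> ('a \<Rightarrow> 'a \<Rightarrow> real) \<Rightarrow> ('a \<Rightarrow> real)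
    \<Rightarrow> ('a \<Rightarrow> real) \<Rightarrow> 'a \<times> 'a \<Rightarrow> ('a \<Rightarrow> real)" where
  "kosz_step E T r b x e =
     (let C = tree_comp T e; \<Delta> = (bset b C - fcut E r x C) * Rcut E r C
      in (\<lambda>v. x v + (if v \<in> C then \<Delta> else 0)))"

definition tau :: "('a \<times> 'a) set \<Rightarrow> ('a \<times> 'a) set \<Rightarrow> ('a \<Rightarrow> 'a \<Rightarrow> real) \<Rightarrow> real" where
  "tau E T r = (\<Sum>(i,j)\<in>T. r i j / Rcut E r (tree_comp T (i,j)))"

definition sample_prob :: "('a \<times> 'a) set \<Rightarrow> ('a \<times> 'a) set \<Rightarrow> ('a \<Rightarrow> 'a \<Rightarrow> real) \<Rightarrow> 'a \<times> 'a \<Rightarrow> real" where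
  "sample_prob E T r e = (1 / tau E T r) * (r (fst e) (snd e) / Rcut E r (tree_comp T e))"

end

theory Submission
  imports Defs
begin


locale kt =
  fixes V :: "'a set" and E T :: "('a \<times> 'a) set" and \<rho> :: 'a
  assumes ug: "undirected_graph V E" and rst: "rooted_spanning_tree V E \<rho> T"
begin

lemma finV: "finite V" and EV: "E \<subseteq> V \<times> V"
  using ug unfolding undirected_graph_def by auto

lemma TV: "T \<subseteq> V \<times> V" using rst EV unfolding rooted_spanning_tree_def by auto

lemma finT: "finite T" using TV finV by (meson finite_SigmaI finite_subset)
lemma finE: "finite E" using EV finV by (meson finite_SigmaI finite_subset)
lemma rootV: "\<rho> \<in> V" and noroot: "(\<rho>, j) \<notin> T" and reach: "v \<in> V \<Longrightarrow> (v, \<rho>) \<in> T\<^sup>*"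
  using rst unfolding rooted_spanning_tree_def by auto

lemma tfun: assumes "(u,w) \<in> T" "(u,w') \<in> T" shows "w = w'"
proof -
  have "u \<in> V" using assms TV by auto
  moreover have "u \<noteq> \<rho>" using assms noroot by auto
  ultimately have "\<exists>!j. (u,j) \<in> T" using rst unfolding rooted_spanning_tree_def by auto
  thus ?thesis using assms by auto
qed

lemma acyc: "(i,i) \<notin> T\<^sup>+"
proof
  assume cyc: "(i,i) \<in> T\<^sup>+"
  obtain w0 where iw0: "(i,w0) \<in> T" and w0i: "(w0,i) \<in> T\<^sup>*" using cyc tranclD by metis
  have bk: "(u,i) \<in> T\<^sup>*" if hu: "(i,u) \<in> T\<^sup>*" for u
    using hu
  proof (induction rule: rtrancl_induct)
    case base show ?case by simp
  next
    case (step u w)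
    have "u = i \<or> (\<exists>c. (u,c) \<in> T \<and> (c,i) \<in> T\<^sup>*)" using step.IH by (meson converse_rtranclE)
    then show ?case using step.hyps(2) iw0 w0i tfun by metis
  qed
  have "i \<in> V" using iw0 TV by auto
  then have "(\<rho>, i) \<in> T\<^sup>*" using bk reach by auto
  then have "\<rho> = i" using noroot by (metis converse_rtranclE)
  then show False using iw0 noroot by auto
qed

lemma comp: assumes "e \<in> T" shows "tree_comp T e = {v. (v, fst e) \<in> T\<^sup>*}"
proof -
  obtain i j where e: "e = (i,j)" by fastforce
  define S where "S = T - {(i,j)}"
  have tc: "tree_comp T e = {w. (i,w) \<in> (S \<union> S\<inverse>)\<^sup>*}" unfolding tree_comp_def e S_def by simp
  have 1: "(w,i) \<in> T\<^sup>*" if "(i,w) \<in> (S \<union> S\<inverse>)\<^sup>*" for w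
    using that
  proof (induction rule: rtrancl_induct)
    case base show ?case by simp
  next
    case (step u w)
    show ?case
    proof (cases "(u,w) \<in> S")
      case True
      then have uw: "(u,w) \<in> T" "(u,w) \<noteq> (i,j)" unfolding S_def by auto
      have ij: "(i,j) \<in> T" using assms e by simp
      have "u \<noteq> i" using uw ij tfun by metis
      then obtain c where "(u,c) \<in> T" "(c,i) \<in> T\<^sup>*" using step.IH by (meson converse_rtranclE)
      then show ?thesis using uw tfun by metis
    next
      case False
      then have "(w,u) \<in> T" using step.hyps(2) unfolding S_def by auto
      then show ?thesis using step.IH by (meson converse_rtrancl_into_rtrancl)
    qed
  qed
  have 2: "(i,v) \<in> (S \<union> S\<inverse>)\<^sup>*" if "(v,i) \<in> T\<^sup>*" for v
    using that
  proof (induction rule: converse_rtrancl_induct)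
    case base show ?case by simp
  next
    case (step v w)
    have "(v,w) \<noteq> (i,j)"
    proof
      assume "(v,w) = (i,j)"
      then have "(i,i) \<in> T\<^sup>+" using step.hyps by (metis Pair_inject rtrancl_into_trancl2)
      then show False using acyc by blast
    qed
    then have "(w,v) \<in> S \<union> S\<inverse>" using step.hyps unfolding S_def by auto
    then show ?case using step.IH by (meson rtrancl_into_rtrancl)
  qed
  show ?thesis unfolding tc using 1 2 e by auto
qed

lemma compV: assumes "e \<in> T" shows "tree_comp T e \<subseteq> V"
proof
  fix v assume "v \<in> tree_comp T e"
  then have "(v, fst e) \<in> T\<^sup>*" using comp assms by auto
  then have "v = fst e \<or> (\<exists>c. (v,c) \<in> T)" by (meson converse_rtranclE)
  then show "v \<in> V" using assms TV by (cases e) auto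
qed

lemma pathsum: assumes "(v,\<rho>) \<in> T\<^sup>*"
  shows "(\<Sum>e\<in>{e\<in>T. (v,fst e)\<in>T\<^sup>*}. z (fst e) - z (snd e)) = z v - (z \<rho> :: real)"
  using assms
proof (induction rule: converse_rtrancl_induct)
  case base
  have "{e\<in>T. (\<rho>,fst e)\<in>T\<^sup>*} = {}"
  proof (safe)
    fix a b assume ab: "(a,b) \<in> T" "(\<rho>, fst (a,b)) \<in> T\<^sup>*"
    then have "\<rho> = a \<or> (\<exists>c. (\<rho>,c) \<in> T)" by (metis converse_rtranclE fst_conv)
    then show "(a,b) \<in> {}" using ab noroot by auto
  qed
  then show ?case by (simp only: sum.empty)
next
  case (step v w)
  let ?A = "\<lambda>v. {e\<in>T. (v,fst e)\<in>T\<^sup>*}"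
  have eq: "?A v = insert (v,w) (?A w)"
  proof (rule set_eqI, rule iffI)
    fix e assume "e \<in> ?A v"
    then have ab: "e \<in> T" "(v, fst e) \<in> T\<^sup>*" by auto
    then have "v = fst e \<or> (\<exists>c. (v,c) \<in> T \<and> (c,fst e) \<in> T\<^sup>*)" by (metis converse_rtranclE)
    then show "e \<in> insert (v,w) (?A w)"
    proof
      assume "v = fst e"
      then have "snd e = w" using ab step.hyps(1) tfun by (metis prod.collapse)
      then show ?thesis using \<open>v = fst e\<close> by (metis insertI1 prod.collapse)
    next
      assume "\<exists>c. (v,c) \<in> T \<and> (c,fst e) \<in> T\<^sup>*"
      then show ?thesis using ab step.hyps(1) tfun by blast
    qed
  next
    fix e assume "e \<in> insert (v,w) (?A w)"
    then show "e \<in> ?A v" using step.hyps(1) by (auto intro: converse_rtrancl_into_rtrancl)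
  qed
  have nin: "(v,w) \<notin> ?A w"
  proof
    assume "(v,w) \<in> ?A w"
    then have "(w,v) \<in> T\<^sup>*" by simp
    then have "(v,v) \<in> T\<^sup>+" using step.hyps(1) by (meson rtrancl_into_trancl2)
    then show False using acyc by blast
  qed
  have fin: "finite (?A w)" using finT by simp
  show ?case unfolding eq using step.IH nin fin by simp
qed

end


context kt begin

definition ind :: "'a set \<Rightarrow> 'a \<Rightarrow> real" where "ind C v = (if v \<in> C then 1 else 0)"

lemma fcut_E: "fcut E r x C = (\<Sum>p\<in>E. (ind C (fst p) - ind C (snd p)) * (x (fst p) - x (snd p)) / r (fst p) (snd p))"
proof -
  have "fcut E r x C = (\<Sum>p\<in>cut_edges E C. (ind C (fst p) - ind C (snd p)) * (x (fst p) - x (snd p)) / r (fst p) (snd p))"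
    unfolding fcut_def split_def
    by (intro sum.cong) (auto simp: cut_edges_def ind_def divide_simps)
  also have "\<dots> = (\<Sum>p\<in>E. (ind C (fst p) - ind C (snd p)) * (x (fst p) - x (snd p)) / r (fst p) (snd p))"
    by (intro sum.mono_neutral_left finE) (auto simp: cut_edges_def ind_def)
  finally show ?thesis .
qed

lemma K_E: "(\<Sum>(k,l)\<in>cut_edges E C. 1 / r k l) = (\<Sum>p\<in>E. (ind C (fst p) - ind C (snd p))^2 / r (fst p) (snd p))"
proof -
  have "(\<Sum>(k,l)\<in>cut_edges E C. 1 / r k l) = (\<Sum>p\<in>cut_edges E C. (ind C (fst p) - ind C (snd p))^2 / r (fst p) (snd p))"
    unfolding split_def
    by (intro sum.cong) (auto simp: cut_edges_def ind_def)
  also have "\<dots> = (\<Sum>p\<in>E. (ind C (fst p) - ind C (snd p))^2 / r (fst p) (snd p))"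
    by (intro sum.mono_neutral_left finE) (auto simp: cut_edges_def ind_def)
  finally show ?thesis .
qed

lemma lap_add: "lap_form E r (\<lambda>v. x v + z v) = lap_form E r x
   + 2 * (\<Sum>p\<in>E. (z (fst p) - z (snd p)) * (x (fst p) - x (snd p)) / r (fst p) (snd p)) + lap_form E r z"
proof -
  have "lap_form E r (\<lambda>v. x v + z v) = (\<Sum>p\<in>E. (x (fst p) - x (snd p))^2 / r (fst p) (snd p)
     + 2 * ((z (fst p) - z (snd p)) * (x (fst p) - x (snd p)) / r (fst p) (snd p)) + (z (fst p) - z (snd p))^2 / r (fst p) (snd p))"
    unfolding lap_form_def split_def
    by (intro sum.cong) (auto simp: power2_eq_square add_divide_distrib[symmetric] algebra_simps)
  also have "\<dots> = lap_form E r x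
   + 2 * (\<Sum>p\<in>E. (z (fst p) - z (snd p)) * (x (fst p) - x (snd p)) / r (fst p) (snd p)) + lap_form E r z"
    unfolding lap_form_def split_def by (simp add: sum.distrib sum_distrib_left)
  finally show ?thesis .
qed

lemma gain0: assumes "C \<subseteq> V"
  shows "Bobj V E r b (\<lambda>v. x v + (if v \<in> C then \<Delta> else 0)) = Bobj V E r b x
     + \<Delta> * (bset b C - fcut E r x C) - \<Delta>^2 / 2 * (\<Sum>(k,l)\<in>cut_edges E C. 1 / r k l)"
proof -
  let ?z = "\<lambda>v. if v \<in> C then \<Delta> else 0"
  have z: "?z v = \<Delta> * ind C v" for v by (simp add: ind_def)
  have s1: "(\<Sum>v\<in>V. b v * (x v + ?z v)) = (\<Sum>v\<in>V. b v * x v) + \<Delta> * bset b C"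
  proof -
    have "(\<Sum>v\<in>V. b v * ?z v) = (\<Sum>v\<in>V. if v \<in> C then \<Delta> * b v else 0)"
      by (intro sum.cong) auto
    also have "\<dots> = (\<Sum>v\<in>V \<inter> C. \<Delta> * b v)" using sum.inter_restrict[OF finV] by metis
    also have "V \<inter> C = C" using assms by auto
    finally have "(\<Sum>v\<in>V. b v * ?z v) = \<Delta> * bset b C" by (simp add: bset_def sum_distrib_left)
    then show ?thesis by (simp add: distrib_left sum.distrib)
  qed
  have s2: "(\<Sum>p\<in>E. (?z (fst p) - ?z (snd p)) * (x (fst p) - x (snd p)) / r (fst p) (snd p)) = \<Delta> * fcut E r x C"
    unfolding fcut_E z by (simp add: sum_distrib_left algebra_simps)
  have s3: "lap_form E r ?z = \<Delta>^2 * (\<Sum>(k,l)\<in>cut_edges E C. 1 / r k l)"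
  proof -
    have "lap_form E r ?z = (\<Sum>p\<in>E. \<Delta>^2 * ((ind C (fst p) - ind C (snd p))^2 / r (fst p) (snd p)))"
      unfolding lap_form_def split_def z by (intro sum.cong) (auto simp: power2_eq_square algebra_simps)
    then show ?thesis unfolding K_E by (simp add: sum_distrib_left)
  qed
  show ?thesis
    unfolding Bobj_def lap_add s1 s2 s3 by (simp add: algebra_simps)
qed

lemma gain: assumes "e \<in> T"
  shows "Bobj V E r b (kosz_step E T r b x e) = Bobj V E r b x
     + (bset b (tree_comp T e) - fcut E r x (tree_comp T e))^2 * Rcut E r (tree_comp T e) / 2"
proof -
  let ?C = "tree_comp T e"
  let ?K = "(\<Sum>(k,l)\<in>cut_edges E ?C. 1 / r k l)"
  let ?D = "bset b ?C - fcut E r x ?C"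
  have R: "Rcut E r ?C = inverse ?K" unfolding Rcut_def ..
  have "Bobj V E r b (kosz_step E T r b x e) = Bobj V E r b x + (?D * inverse ?K) * ?D - (?D * inverse ?K)^2/2 * ?K"
    unfolding kosz_step_def Let_def R using gain0[OF compV[OF assms]] by simp
  also have "\<dots> = Bobj V E r b x + ?D^2 * inverse ?K / 2"
    by (cases "?K = 0") (simp_all add: field_simps power2_eq_square)
  finally show ?thesis unfolding R by simp
qed

end


context kt begin

lemma pathsum2: assumes "v \<in> V"
  shows "(\<Sum>e\<in>T. (z (fst e) - z (snd e)) * ind (tree_comp T e) v) = z v - (z \<rho> :: real)"
proof -
  have "(\<Sum>e\<in>T. (z (fst e) - z (snd e)) * ind (tree_comp T e) v)
      = (\<Sum>e\<in>T. if (v, fst e) \<in> T\<^sup>* then z (fst e) - z (snd e) else 0)"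
    by (intro sum.cong) (auto simp: ind_def comp)
  also have "\<dots> = (\<Sum>e\<in>{e\<in>T. (v,fst e)\<in>T\<^sup>*}. z (fst e) - z (snd e))"
    by (simp add: sum.inter_filter[OF finT])
  also have "\<dots> = z v - z \<rho>" using pathsum reach assms by blast
  finally show ?thesis .
qed

lemma decomp: assumes b0: "(\<Sum>v\<in>V. b v) = 0"
  shows "(\<Sum>v\<in>V. b v * z v) - (\<Sum>p\<in>E. (z (fst p) - z (snd p)) * (x (fst p) - x (snd p)) / r (fst p) (snd p))
    = (\<Sum>e\<in>T. (z (fst e) - z (snd e)) * (bset b (tree_comp T e) - fcut E r x (tree_comp T e)))"
proof -
  let ?w = "\<lambda>e. z (fst e) - z (snd e)"
  have bs: "bset b (tree_comp T e) = (\<Sum>v\<in>V. b v * ind (tree_comp T e) v)" if "e \<in> T" for e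
  proof -
    have "(\<Sum>v\<in>V. b v * ind (tree_comp T e) v) = (\<Sum>v\<in>V. if v \<in> tree_comp T e then b v else 0)"
      by (intro sum.cong) (auto simp: ind_def)
    also have "\<dots> = (\<Sum>v\<in>V \<inter> tree_comp T e. b v)" using sum.inter_restrict[OF finV] by metis
    also have "V \<inter> tree_comp T e = tree_comp T e" using compV[OF that] by auto
    finally show ?thesis unfolding bset_def by simp
  qed
  have A: "(\<Sum>e\<in>T. ?w e * bset b (tree_comp T e)) = (\<Sum>v\<in>V. b v * z v)"
  proof -
    have "(\<Sum>e\<in>T. ?w e * bset b (tree_comp T e)) = (\<Sum>e\<in>T. \<Sum>v\<in>V. b v * (?w e * ind (tree_comp T e) v))"
      by (intro sum.cong) (auto simp: bs sum_distrib_left algebra_simps)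
    also have "\<dots> = (\<Sum>v\<in>V. \<Sum>e\<in>T. b v * (?w e * ind (tree_comp T e) v))" by (rule sum.swap)
    also have "\<dots> = (\<Sum>v\<in>V. b v * (z v - z \<rho>))"
      by (intro sum.cong) (auto simp: pathsum2 sum_distrib_left[symmetric])
    also have "\<dots> = (\<Sum>v\<in>V. b v * z v) - (\<Sum>v\<in>V. b v) * z \<rho>"
      by (simp add: right_diff_distrib sum_subtractf flip: sum_distrib_right)
    finally show ?thesis using b0 by simp
  qed
  define X where "X = (\<lambda>p. (x (fst p) - x (snd p)) / r (fst p) (snd p))"
  have B: "(\<Sum>e\<in>T. ?w e * fcut E r x (tree_comp T e)) = (\<Sum>p\<in>E. ?w p * X p)"
  proof -
    have "(\<Sum>e\<in>T. ?w e * fcut E r x (tree_comp T e))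
       = (\<Sum>e\<in>T. \<Sum>p\<in>E. X p * (?w e * ind (tree_comp T e) (fst p) - ?w e * ind (tree_comp T e) (snd p)))"
    proof (intro sum.cong refl)
      fix e
      have "fcut E r x (tree_comp T e) = (\<Sum>p\<in>E. X p * (ind (tree_comp T e) (fst p) - ind (tree_comp T e) (snd p)))"
        unfolding fcut_E X_def by (intro sum.cong refl) simp
      then show "?w e * fcut E r x (tree_comp T e) = (\<Sum>p\<in>E. X p * (?w e * ind (tree_comp T e) (fst p) - ?w e * ind (tree_comp T e) (snd p)))"
        by (simp add: sum_distrib_left algebra_simps)
    qed
    also have "\<dots> = (\<Sum>p\<in>E. \<Sum>e\<in>T. X p * (?w e * ind (tree_comp T e) (fst p) - ?w e * ind (tree_comp T e) (snd p)))"
      by (rule sum.swap)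
    also have "\<dots> = (\<Sum>p\<in>E. X p * ((z (fst p) - z \<rho>) - (z (snd p) - z \<rho>)))"
    proof (intro sum.cong refl)
      fix p assume "p \<in> E"
      then have "fst p \<in> V" "snd p \<in> V" using EV by auto
      then show "(\<Sum>e\<in>T. X p * (?w e * ind (tree_comp T e) (fst p) - ?w e * ind (tree_comp T e) (snd p)))
         = X p * ((z (fst p) - z \<rho>) - (z (snd p) - z \<rho>))"
        by (simp add: sum_distrib_left[symmetric] sum_subtractf pathsum2)
    qed
    finally show ?thesis unfolding X_def by (simp add: algebra_simps)
  qed
  have C: "(\<Sum>p\<in>E. ?w p * X p) = (\<Sum>p\<in>E. (z (fst p) - z (snd p)) * (x (fst p) - x (snd p)) / r (fst p) (snd p))"
    unfolding X_def by simp
  have "(\<Sum>e\<in>T. ?w e * (bset b (tree_comp T e) - fcut E r x (tree_comp T e)))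
     = (\<Sum>e\<in>T. ?w e * bset b (tree_comp T e)) - (\<Sum>e\<in>T. ?w e * fcut E r x (tree_comp T e))"
    by (simp add: right_diff_distrib sum_subtractf)
  then show ?thesis unfolding A B C by simp
qed

lemma rT: assumes "\<forall>i j. r i j = r j i" "\<forall>(i,j)\<in>E. r i j > 0" "e \<in> T"
  shows "r (fst e) (snd e) > 0"
proof -
  obtain a c where e: "e = (a,c)" by fastforce
  have "(a,c) \<in> E \<or> (c,a) \<in> E" using assms(3) rst e unfolding rooted_spanning_tree_def by auto
  then show ?thesis using assms(1,2) e by auto
qed

lemma lapT: assumes rs: "\<forall>i j. r i j = r j i" and rp: "\<forall>(i,j)\<in>E. r i j > 0"
  shows "(\<Sum>e\<in>T. (z (fst e) - z (snd e))^2 / r (fst e) (snd e)) \<le> lap_form E r z"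
proof -
  define g where "g e = (if e \<in> E then e else prod.swap e)" for e :: "'a \<times> 'a"
  let ?h = "\<lambda>p. (z (fst p) - z (snd p))^2 / r (fst p) (snd p)"
  have TE: "T \<subseteq> E \<union> E\<inverse>" using rst unfolding rooted_spanning_tree_def by auto
  have no2: False if "p \<in> T" "prod.swap p \<in> T" for p
  proof -
    obtain a c where p: "p = (a,c)" by fastforce
    have "(a,c) \<in> T\<^sup>+" "(c,a) \<in> T\<^sup>+" using that p by auto
    then have "(a,a) \<in> T\<^sup>+" by (rule trancl_trans)
    then show False using acyc by blast
  qed
  have inj: "inj_on g T"
  proof (rule inj_onI)
    fix e1 e2 assume e: "e1 \<in> T" "e2 \<in> T" "g e1 = g e2"
    show "e1 = e2"
    proof (cases "e1 \<in> E")
      case True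
      show ?thesis
      proof (cases "e2 \<in> E")
        case True
        then show ?thesis using e \<open>e1 \<in> E\<close> unfolding g_def by simp
      next
        case False
        then have "e1 = prod.swap e2" using e \<open>e1 \<in> E\<close> unfolding g_def by simp
        then show ?thesis using no2[of e2] e by simp
      qed
    next
      case False
      show ?thesis
      proof (cases "e2 \<in> E")
        case True
        then have "prod.swap e1 = e2" using e \<open>e1 \<notin> E\<close> unfolding g_def by simp
        then show ?thesis using no2[of e1] e by simp
      next
        case False
        then have "prod.swap e1 = prod.swap e2" using e \<open>e1 \<notin> E\<close> unfolding g_def by simp
        then show ?thesis by (metis swap_swap)
      qed
    qed
  qed
  have gE: "g ` T \<subseteq> E" using TE unfolding g_def by auto
  have hg: "?h e = ?h (g e)" for e
    using rs unfolding g_def by (cases e) (auto simp: power2_commute)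
  have "(\<Sum>e\<in>T. ?h e) = (\<Sum>e\<in>T. ?h (g e))" using hg by simp
  also have "\<dots> = (\<Sum>p\<in>g ` T. ?h p)" by (simp add: sum.reindex[OF inj])
  also have "\<dots> \<le> (\<Sum>p\<in>E. ?h p)"
    by (intro sum_mono2 finE gE) (use rp in auto)
  also have "\<dots> = lap_form E r z" unfolding lap_form_def split_def ..
  finally show ?thesis .
qed

lemma bound: assumes rs: "\<forall>i j. r i j = r j i" and rp: "\<forall>(i,j)\<in>E. r i j > 0"
  and b0: "(\<Sum>v\<in>V. b v) = 0"
  shows "Bobj V E r b y - Bobj V E r b x \<le>
    (\<Sum>e\<in>T. r (fst e) (snd e) * (bset b (tree_comp T e) - fcut E r x (tree_comp T e))^2 / 2)"
proof -
  define z where "z v = y v - x v" for v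
  let ?D = "\<lambda>e. bset b (tree_comp T e) - fcut E r x (tree_comp T e)"
  let ?w = "\<lambda>e. z (fst e) - z (snd e)"
  have y: "y = (\<lambda>v. x v + z v)" unfolding z_def by auto
  have "Bobj V E r b y - Bobj V E r b x = ((\<Sum>v\<in>V. b v * z v) - (\<Sum>p\<in>E. (z (fst p) - z (snd p)) * (x (fst p) - x (snd p)) / r (fst p) (snd p))) - lap_form E r z / 2"
    unfolding Bobj_def y lap_add by (simp add: algebra_simps sum.distrib)
  also have "\<dots> = (\<Sum>e\<in>T. ?w e * ?D e) - lap_form E r z / 2"
    using decomp[OF b0] by simp
  also have "\<dots> \<le> (\<Sum>e\<in>T. ?w e * ?D e) - (\<Sum>e\<in>T. ?w e ^2 / r (fst e) (snd e)) / 2"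
    using lapT[OF rs rp, of z] by simp
  also have "\<dots> = (\<Sum>e\<in>T. ?w e * ?D e - ?w e ^2 / r (fst e) (snd e) / 2)"
    by (simp add: sum_subtractf sum_divide_distrib)
  also have "\<dots> \<le> (\<Sum>e\<in>T. r (fst e) (snd e) * ?D e ^2 / 2)"
  proof (rule sum_mono)
    fix e assume "e \<in> T"
    then have rpos: "r (fst e) (snd e) > 0" using rT[OF rs rp] by blast
    define R where "R = r (fst e) (snd e)"
    have "0 \<le> (R * ?D e - ?w e)^2 / R / 2" using rpos unfolding R_def by simp
    then show "?w e * ?D e - ?w e ^2 / r (fst e) (snd e) / 2 \<le> r (fst e) (snd e) * ?D e ^2 / 2"
      using rpos unfolding R_def[symmetric] by (simp add: field_simps power2_eq_square)
  qed
  finally show ?thesis .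
qed

end


context kt begin

lemma Kpos: fixes r :: "'a \<Rightarrow> 'a \<Rightarrow> real" assumes cg: "connected_graph V E" and rp: "\<forall>(i,j)\<in>E. r i j > 0" and eT: "e \<in> T"
  shows "(\<Sum>(k,l)\<in>cut_edges E (tree_comp T e). 1 / r k l) > 0"
proof -
  let ?C = "tree_comp T e"
  have ne: "cut_edges E ?C \<noteq> {}"
  proof
    assume emp: "cut_edges E ?C = {}"
    have fe: "fst e \<in> ?C" using comp[OF eT] by simp
    have feV: "fst e \<in> V" "snd e \<in> V" using eT TV by auto
    have "w \<in> ?C" if "(fst e, w) \<in> (E \<union> E\<inverse>)\<^sup>*" for w
      using that
    proof (induction rule: rtrancl_induct)
      case base show ?case using fe .
    next
      case (step u w)
      then show ?case using emp unfolding cut_edges_def by blast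
    qed
    then have "snd e \<in> ?C" using cg feV unfolding connected_graph_def by blast
    then have "(snd e, fst e) \<in> T\<^sup>*" using comp[OF eT] by simp
    then have "(fst e, fst e) \<in> T\<^sup>+" using eT by (metis prod.collapse rtrancl_into_trancl2)
    then show False using acyc by blast
  qed
  have fin: "finite (cut_edges E ?C)" using finE by (rule rev_finite_subset) (auto simp: cut_edges_def)
  show ?thesis
  proof -
    have "\<And>p. p \<in> cut_edges E ?C \<Longrightarrow> 0 < 1 / r (fst p) (snd p)"
    proof -
      fix p assume "p \<in> cut_edges E ?C"
      then have "p \<in> E" by (auto simp: cut_edges_def)
      then have "0 < r (fst p) (snd p)" using rp by (cases p) fastforce
      then show "0 < 1 / r (fst p) (snd p)" by simp
    qed
    from sum_pos[OF fin ne this] show ?thesis by (simp add: split_def)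
  qed
qed

end

theorem mainTheorem12:
  fixes V :: "'a set" and E T :: "('a \<times> 'a) set" and \<rho> :: 'a
    and r :: "'a \<Rightarrow> 'a \<Rightarrow> real" and b x xstar :: "'a \<Rightarrow> real"
  assumes "undirected_graph V E" and "connected_graph V E"
    and "\<forall>i j. r i j = r j i" and "\<forall>(i,j)\<in>E. r i j > 0"
    and "(\<Sum>v\<in>V. b v) = 0"
    and "\<forall>y. Bobj V E r b y \<le> Bobj V E r b xstar"
    and "rooted_spanning_tree V E \<rho> T"
  shows "Bobj V E r b xstar
           - (\<Sum>e\<in>T. sample_prob E T r e * Bobj V E r b (kosz_step E T r b x e))
         \<le> (1 - 1 / tau E T r) * (Bobj V E r b xstar - Bobj V E r b x)"
proof -
  interpret kt V E T \<rho> using assms(1,7) by unfold_locales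
  let ?B = "Bobj V E r b"
  let ?C = "\<lambda>e. tree_comp T e"
  let ?D = "\<lambda>e. bset b (?C e) - fcut E r x (?C e)"
  let ?R = "\<lambda>e. Rcut E r (?C e)"
  let ?r = "\<lambda>e. r (fst e) (snd e)"
  define S where "S = (\<Sum>e\<in>T. ?r e * ?D e ^ 2 / 2)"
  have G: "?B xstar - ?B x \<le> S" unfolding S_def using bound[OF assms(3,4,5)] by blast
  have Rpos: "?R e > 0" if "e \<in> T" for e
    unfolding Rcut_def using Kpos[OF assms(2,4) that] by simp
  have rpos: "?r e > 0" if "e \<in> T" for e using rT[OF assms(3,4) that] .
  have tau: "tau E T r = (\<Sum>e\<in>T. ?r e / ?R e)" unfolding tau_def split_def by simp
  show ?thesis
  proof (cases "T = {}")
    case True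
    have "?B xstar - ?B (\<lambda>_. 0) \<le> 0" using bound[OF assms(3,4,5), of xstar "\<lambda>_. 0"] True by simp
    moreover have "?B (\<lambda>_. 0) = 0" unfolding Bobj_def lap_form_def by simp
    moreover have "?B x \<le> ?B xstar" using assms(6) by blast
    ultimately show ?thesis using True by (simp add: tau_def)
  next
    case False
    have taupos: "tau E T r > 0" unfolding tau
      using False finT Rpos rpos by (intro sum_pos) auto
    have "(\<Sum>e\<in>T. sample_prob E T r e * ?B (kosz_step E T r b x e))
        = (\<Sum>e\<in>T. (?r e / ?R e) * ?B x / tau E T r + (?r e * ?D e ^ 2 / 2) / tau E T r)"
    proof (intro sum.cong refl)
      fix e assume eT: "e \<in> T"
      have "?R e \<noteq> 0" "tau E T r \<noteq> 0" using Rpos[OF eT] taupos by simp_all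
      then show "sample_prob E T r e * ?B (kosz_step E T r b x e) = (?r e / ?R e) * ?B x / tau E T r + (?r e * ?D e ^ 2 / 2) / tau E T r"
        unfolding sample_prob_def gain[OF eT] by (simp add: field_simps)
    qed
    also have "\<dots> = ?B x + S / tau E T r"
    proof -
      have "(\<Sum>e\<in>T. (?r e / ?R e) * ?B x / tau E T r) = (\<Sum>e\<in>T. ?r e / ?R e) * ?B x / tau E T r"
        by (simp only: sum_distrib_right sum_divide_distrib)
      also have "\<dots> = ?B x" unfolding tau[symmetric] using taupos by simp
      finally show ?thesis unfolding S_def sum.distrib by (simp add: sum_divide_distrib[symmetric])
    qed
    finally have E: "(\<Sum>e\<in>T. sample_prob E T r e * ?B (kosz_step E T r b x e)) = ?B x + S / tau E T r" .
    have "(?B xstar - ?B x) / tau E T r \<le> S / tau E T r" using G taupos by (simp add: divide_right_mono)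
    then show ?thesis unfolding E by (simp add: algebra_simps diff_divide_distrib)
  qed
qed


end
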